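(* Let $(T,\leq)$ be an ordered set and let $T^\ast$ be its ultrapower with respect to an ultrafilter $\mathcal{U}$ on $\mathbb{N}$. Then $T^\ast$ is complete (every nonempty subset of $T^\ast$ that is bounded from above has a least upper bound) if and only if $T$ is finite.
   Context: An ordered set is a nonempty set with a reflexive, antisymmetric, transitive and linear (total) relation $\leq$. An ultrafilter on $\mathbb{N}$ is a nonempty family $\mathcal{U}$ of subsets of $\mathbb{N}$ such that: (1) $K \in \mathcal{U}$, $K \subset L \subset \mathbb{N}$ imply $L \in \mathcal{U}$; (2) $K,L \in \mathcal{U}$ imply $K\cap L \in \mathcal{U}$; (3) every $K \in \mathcal{U}$ is infinite; (4) for every $K \subset \mathbb{N}$, $K \in \mathcal{U}$ or $\mathbb{N}\setminus K \in \mathcal{U}$. The ultrapower $T^\ast$: on the set $\mathcal{T}$ of all sequences $(a_n):\mathbb{N}\to T$ define $(a_n)\sim(b_n)$ iff $\{n : a_n = b_n\} \in \mathcal{U}$; this is an equivalence relation, $T^\ast$ is the set of its classes, $\overline{(a_n)}$ denotes the class of $(a_n)$, and $T^\ast$ is ordered by $\overline{(a_n)} \leq \overline{(b_n)}$ iff $\{ n : a_n \leq b_n\} \in \mathcal{U}$ (a well-defined total order). *)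

theory Defs
  imports Main
begin

definition nat_ultrafilter :: "nat set set \<Rightarrow> bool" where
  "nat_ultrafilter U \<longleftrightarrow>
     U \<noteq> {} \<and>
     (\<forall>K L. K \<in> U \<and> K \<subseteq> L \<longrightarrow> L \<in> U) \<and>
     (\<forall>K L. K \<in> U \<and> L \<in> U \<longrightarrow> K \<inter> L \<in> U) \<and>
     (\<forall>K \<in> U. infinite K) \<and>
     (\<forall>K. K \<in> U \<or> (UNIV - K) \<in> U)"

definition ueq :: "nat set set \<Rightarrow> ((nat \<Rightarrow> 'a) \<times> (nat \<Rightarrow> 'a)) set" where
  "ueq U = {(a, b). {n. a n = b n} \<in> U}"

definition ultrapower :: "nat set set \<Rightarrow> (nat \<Rightarrow> 'a) set set" where
  "ultrapower U = UNIV // ueq U"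

definition uleq :: "nat set set \<Rightarrow> (nat \<Rightarrow> 'a::linorder) set \<Rightarrow> (nat \<Rightarrow> 'a) set \<Rightarrow> bool" where
  "uleq U X Y \<longleftrightarrow> (\<exists>a \<in> X. \<exists>b \<in> Y. {n. a n \<le> b n} \<in> U)"

definition order_complete :: "'b set \<Rightarrow> ('b \<Rightarrow> 'b \<Rightarrow> bool) \<Rightarrow> bool" where
  "order_complete A le \<longleftrightarrow>
     (\<forall>S. S \<subseteq> A \<and> S \<noteq> {} \<and> (\<exists>u \<in> A. \<forall>x \<in> S. le x u) \<longrightarrow>
        (\<exists>s \<in> A. (\<forall>x \<in> S. le x s) \<and> (\<forall>u \<in> A. (\<forall>x \<in> S. le x u) \<longrightarrow> le s u)))"

end

theory Submission
  imports Defs Complex_Main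
begin

lemma uf_up: "nat_ultrafilter U \<Longrightarrow> K \<in> U \<Longrightarrow> K \<subseteq> L \<Longrightarrow> L \<in> U"
  unfolding nat_ultrafilter_def by blast

lemma uf_int: "nat_ultrafilter U \<Longrightarrow> K \<in> U \<Longrightarrow> L \<in> U \<Longrightarrow> K \<inter> L \<in> U"
  unfolding nat_ultrafilter_def by blast

lemma uf_empty: "nat_ultrafilter U \<Longrightarrow> K \<in> U \<Longrightarrow> K = {} \<Longrightarrow> False"
  unfolding nat_ultrafilter_def by blast

lemma uf_UNIV: "nat_ultrafilter U \<Longrightarrow> UNIV \<in> U"
  unfolding nat_ultrafilter_def by blast

lemma uf_compl: "nat_ultrafilter U \<Longrightarrow> K \<notin> U \<Longrightarrow> UNIV - K \<subseteq> L \<Longrightarrow> L \<in> U"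
  unfolding nat_ultrafilter_def by blast

lemma uf_disj: "nat_ultrafilter U \<Longrightarrow> K \<in> U \<Longrightarrow> L \<in> U \<Longrightarrow> K \<inter> L = {} \<Longrightarrow> False"
  using uf_int uf_empty by blast

lemma uf_ge: assumes "nat_ultrafilter U" shows "{n. k \<le> n} \<in> U"
proof -
  have "{..<k} \<notin> U" using assms unfolding nat_ultrafilter_def by blast
  then show ?thesis by (rule uf_compl[OF assms]) auto
qed

lemma uf_Inter: assumes U: "nat_ultrafilter U" and "finite F"
  shows "(\<forall>X\<in>F. X \<in> U) \<longrightarrow> \<Inter>F \<in> U"
  using \<open>finite F\<close>
proof (induction F rule: finite_induct)
  case empty then show ?case using uf_UNIV[OF U] by simp
next
  case (insert x F) then show ?case using uf_int[OF U] by auto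
qed

context linorder begin

lemma ult_diag:
  assumes U: "nat_ultrafilter U"
  and mono: "\<And>i j. i < (j::nat) \<Longrightarrow> t i < t j"
  shows "{n. t k \<le> t n} \<in> U"
proof (rule uf_up[OF U uf_ge[OF U, of k]])
  show "{n. k \<le> n} \<subseteq> {n. t k \<le> t n}"
    using mono by (auto simp: le_less nat_less_le)
qed

lemma ult_core:
  assumes U: "nat_ultrafilter U"
  and mono: "\<And>i j. i < (j::nat) \<Longrightarrow> t i < t j"
  and ub: "\<And>k. {n. t k \<le> b n} \<in> U"
  shows "(\<forall>k. {n. t k \<le> t n} \<in> U) \<and> (\<exists>c. (\<forall>k. {n. t k \<le> c n} \<in> U) \<and> {n. c n < b n} \<in> U)"
proof -
  have diag: "\<forall>k. {n. t k \<le> t n} \<in> U"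
  proof
    fix k
    show "{n. t k \<le> t n} \<in> U"
    proof (rule uf_up[OF U uf_ge[OF U, of k]])
      show "{n. k \<le> n} \<subseteq> {n. t k \<le> t n}"
        using mono by (auto simp: le_less nat_less_le)
    qed
  qed
  have "\<exists>c. (\<forall>k. {n. t k \<le> c n} \<in> U) \<and> {n. c n < b n} \<in> U"
  proof (cases "{n. \<forall>k. t k \<le> b n} \<in> U")
    case True
    have "{n. t n < b n} \<in> U"
    proof (rule uf_up[OF U True])
      show "{n. \<forall>k. t k \<le> b n} \<subseteq> {n. t n < b n}"
        using mono less_le_trans by blast
    qed
    then show ?thesis using diag by blast
  next
    case False
    have B: "{n. \<exists>k. b n < t k} \<in> U"
      by (rule uf_compl[OF U False]) (auto simp: not_le)
    define h where "h n = (LEAST k. b n < t k)" for n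
    have hb: "\<And>n. \<exists>k. b n < t k \<Longrightarrow> b n < t (h n)"
      unfolding h_def by (rule LeastI_ex)
    have hmin: "\<And>n k. b n < t k \<Longrightarrow> h n \<le> k"
      unfolding h_def by (rule Least_le)
    have bigh: "k < h n" if "\<exists>k. b n < t k" "t k \<le> b n" for n k
    proof (rule ccontr)
      assume "\<not> k < h n"
      then have "h n \<le> k" by simp
      then have "t (h n) \<le> t k" using mono by (auto simp: le_less nat_less_le)
      then show False using hb[OF that(1)] that(2) by simp
    qed
    define c where "c n = t (h n - 2)" for n
    have "\<forall>k. {n. t k \<le> c n} \<in> U"
    proof
      fix k
      show "{n. t k \<le> c n} \<in> U"
      proof (rule uf_up[OF U uf_int[OF U B ub[of "k+2"]]])
        show "{n. \<exists>k. b n < t k} \<inter> {n. t (k + 2) \<le> b n} \<subseteq> {n. t k \<le> c n}"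
        proof
          fix n assume "n \<in> {n. \<exists>k. b n < t k} \<inter> {n. t (k + 2) \<le> b n}"
          then have "k + 2 < h n" using bigh by blast
          then have "k < h n - 2" by simp
          then show "n \<in> {n. t k \<le> c n}" using mono c_def less_imp_le by auto
        qed
      qed
    qed
    moreover have "{n. c n < b n} \<in> U"
    proof (rule uf_up[OF U uf_int[OF U B ub[of "2"]]])
      show "{n. \<exists>k. b n < t k} \<inter> {n. t 2 \<le> b n} \<subseteq> {n. c n < b n}"
      proof
        fix n assume n: "n \<in> {n. \<exists>k. b n < t k} \<inter> {n. t 2 \<le> b n}"
        then have h2: "2 < h n" using bigh by blast
        have "\<not> b n < t (h n - 1)"
        proof
          assume "b n < t (h n - 1)"
          then have "h n \<le> h n - 1" by (rule hmin)
          then show False using h2 by simp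
        qed
        then have "t (h n - 1) \<le> b n" by (simp add: not_less)
        moreover have "t (h n - 2) < t (h n - 1)" using h2 mono by simp
        ultimately show "n \<in> {n. c n < b n}" unfolding c_def using less_le_trans by auto
      qed
    qed
    ultimately show ?thesis by blast
  qed
  then show ?thesis using diag by blast
qed

end

lemma ult_core_dual:
  fixes t b :: "nat \<Rightarrow> 'a::linorder"
  assumes U: "nat_ultrafilter U"
  and mono: "\<And>i j. i < (j::nat) \<Longrightarrow> t j < t i"
  and ub: "\<And>k. {n. b n \<le> t k} \<in> U"
  shows "(\<forall>k. {n. t n \<le> t k} \<in> U) \<and> (\<exists>c. (\<forall>k. {n. c n \<le> t k} \<in> U) \<and> {n. b n < c n} \<in> U)"
  using linorder.ult_core[OF dual_linorder, of U t b] assms by simp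

lemma ult_diag_dual:
  fixes t :: "nat \<Rightarrow> 'a::linorder"
  assumes U: "nat_ultrafilter U"
  and mono: "\<And>i j. i < (j::nat) \<Longrightarrow> t j < t i"
  shows "{n. t n \<le> t k} \<in> U"
  using linorder.ult_diag[OF dual_linorder, of U t] assms by simp

lemma equiv_ueq: assumes U: "nat_ultrafilter U" shows "equiv UNIV (ueq U)"
proof -
  have r: "refl (ueq U)" using uf_UNIV[OF U] by (auto simp: refl_on_def ueq_def)
  have s: "sym (ueq U)" by (auto simp: sym_def ueq_def eq_commute)
  have t: "trans (ueq U)"
  proof (rule transI)
    fix x y z assume "(x, y) \<in> ueq U" "(y, z) \<in> ueq U"
    then have "{n. x n = y n} \<inter> {n. y n = z n} \<in> U" using uf_int[OF U] by (auto simp: ueq_def)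
    then show "(x, z) \<in> ueq U" unfolding ueq_def by (auto elim!: uf_up[OF U])
  qed
  show ?thesis using r s t by (simp add: equiv_def)
qed

lemma ultrapower_eq: "ultrapower U = range (\<lambda>a. ueq U `` {a})"
  by (auto simp: ultrapower_def quotient_def)

lemma uleq_cls:
  fixes a b :: "nat \<Rightarrow> 'a::linorder"
  assumes U: "nat_ultrafilter U"
  shows "uleq U (ueq U `` {a}) (ueq U `` {b}) \<longleftrightarrow> {n. a n \<le> b n} \<in> U"
proof
  assume "uleq U (ueq U `` {a}) (ueq U `` {b})"
  then obtain a' b' where a': "{n. a n = a' n} \<in> U" and b': "{n. b n = b' n} \<in> U"
    and ab: "{n. a' n \<le> b' n} \<in> U"
    by (auto simp: uleq_def ueq_def)
  have "{n. a n = a' n} \<inter> {n. b n = b' n} \<inter> {n. a' n \<le> b' n} \<in> U"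
    using uf_int[OF U] a' b' ab by blast
  then show "{n. a n \<le> b n} \<in> U" by (rule uf_up[OF U]) auto
next
  assume "{n. a n \<le> b n} \<in> U"
  moreover have "a \<in> ueq U `` {a}" "b \<in> ueq U `` {b}"
    using uf_UNIV[OF U] by (auto simp: ueq_def)
  ultimately show "uleq U (ueq U `` {a}) (ueq U `` {b})" unfolding uleq_def by blast
qed

lemma fin_const:
  fixes a :: "nat \<Rightarrow> 'a"
  assumes U: "nat_ultrafilter U" and fin: "finite (UNIV :: 'a set)"
  shows "\<exists>t. {n. a n = t} \<in> U"
proof (rule ccontr)
  assume N: "\<not> ?thesis"
  let ?F = "range (\<lambda>t. UNIV - {n. a n = t})"
  have "\<forall>X \<in> ?F. X \<in> U"
  proof
    fix X assume "X \<in> ?F"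
    then obtain t where X: "X = UNIV - {n. a n = t}" by blast
    have "{n. a n = t} \<notin> U" using N by blast
    then show "X \<in> U" unfolding X by (rule uf_compl[OF U]) simp
  qed
  moreover have "finite ?F" using fin by simp
  ultimately have "\<Inter>?F \<in> U" using uf_Inter[OF U] by blast
  moreover have "\<Inter>?F = {}" by auto
  ultimately show False using uf_empty[OF U] by blast
qed

lemma mono_seq_exists:
  assumes "infinite (UNIV :: 'a::linorder set)"
  shows "\<exists>t :: nat \<Rightarrow> 'a. (\<forall>i j. i < j \<longrightarrow> t i < t j) \<or> (\<forall>i j. i < j \<longrightarrow> t j < t i)"
proof -
  obtain f :: "nat \<Rightarrow> 'a" where f: "inj f" using infinite_countable_subset[OF assms] by blast
  obtain g where g: "strict_mono g" "monoseq (\<lambda>n. f (g n))" using seq_monosub by blast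
  have inj: "f (g i) \<noteq> f (g j)" if "i < j" for i j
    using g(1) f that by (simp add: strict_mono_eq inj_eq)
  from g(2) show ?thesis unfolding monoseq_def
  proof
    assume H: "\<forall>m n. m \<le> n \<longrightarrow> f (g m) \<le> f (g n)"
    have M: "\<forall>i j. i < j \<longrightarrow> f (g i) < f (g j)"
    proof (intro allI impI)
      fix i j :: nat assume ij: "i < j"
      then have "f (g i) \<le> f (g j)" using H by simp
      then show "f (g i) < f (g j)" using inj[OF ij] by (simp add: order_less_le)
    qed
    show ?thesis by (rule exI[of _ "\<lambda>n. f (g n)"], rule disjI1, simp add: M)
  next
    assume H: "\<forall>m n. m \<le> n \<longrightarrow> f (g n) \<le> f (g m)"
    have M: "\<forall>i j. i < j \<longrightarrow> f (g j) < f (g i)"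
    proof (intro allI impI)
      fix i j :: nat assume ij: "i < j"
      then have "f (g j) \<le> f (g i)" using H by simp
      then show "f (g j) < f (g i)" using inj[OF ij] by (simp add: order_less_le)
    qed
    show ?thesis by (rule exI[of _ "\<lambda>n. f (g n)"], rule disjI2, simp add: M)
  qed
qed

theorem mainTheorem6:
  fixes U :: "nat set set"
  assumes "nat_ultrafilter U"
  shows "order_complete (ultrapower U :: (nat \<Rightarrow> 'a::linorder) set set) (uleq U)
           \<longleftrightarrow> finite (UNIV :: 'a set)"
proof
  assume C: "order_complete (ultrapower U :: (nat \<Rightarrow> 'a::linorder) set set) (uleq U)"
  show "finite (UNIV :: 'a set)"
  proof (rule ccontr)
    assume "infinite (UNIV :: 'a set)"
    then obtain t :: "nat \<Rightarrow> 'a" where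
      "(\<forall>i j. i < j \<longrightarrow> t i < t j) \<or> (\<forall>i j. i < j \<longrightarrow> t j < t i)"
      using mono_seq_exists by blast
    then show False
    proof
      assume inc: "\<forall>i j. i < j \<longrightarrow> t i < t j"
      define S where "S = (\<lambda>k. ueq U `` {(\<lambda>_. t k)}) ` UNIV"
      have core0: "\<forall>k. {n. t k \<le> t n} \<in> U"
        using ult_diag[OF assms, of t] inc by blast
      have "S \<subseteq> ultrapower U" "S \<noteq> {}" unfolding S_def ultrapower_eq by auto
      moreover have "\<forall>x\<in>S. uleq U x (ueq U `` {t})"
        unfolding S_def using uleq_cls[OF assms] core0 by auto
      moreover have "ueq U `` {t} \<in> ultrapower U" unfolding ultrapower_eq by auto
      ultimately obtain s where s: "s \<in> ultrapower U" "\<forall>x\<in>S. uleq U x s"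
        "\<forall>u\<in>ultrapower U. (\<forall>x\<in>S. uleq U x u) \<longrightarrow> uleq U s u"
        using C unfolding order_complete_def by blast
      then obtain b where b: "s = ueq U `` {b}" unfolding ultrapower_eq by auto
      have ub: "{n. t k \<le> b n} \<in> U" for k
      proof -
        have "uleq U (ueq U `` {(\<lambda>_. t k)}) s" using s(2) unfolding S_def by blast
        then show ?thesis using uleq_cls[OF assms, of "\<lambda>_. t k" b] b by simp
      qed
      obtain c where c: "\<forall>k. {n. t k \<le> c n} \<in> U" "{n. c n < b n} \<in> U"
        using ult_core[OF assms, of t b] inc ub by blast
      have "uleq U s (ueq U `` {c})"
        using s(3) c(1) unfolding S_def ultrapower_eq using uleq_cls[OF assms] by auto
      then have "{n. b n \<le> c n} \<in> U" using uleq_cls[OF assms] b by auto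
      then show False by (rule uf_disj[OF assms c(2)]) auto
    next
      assume dec: "\<forall>i j. i < j \<longrightarrow> t j < t i"
      define S where "S = {x \<in> ultrapower U. \<forall>k. uleq U x (ueq U `` {(\<lambda>_. t k)})}"
      have core0: "\<forall>k. {n. t n \<le> t k} \<in> U"
        using ult_diag_dual[OF assms, of t] dec by blast
      have "ueq U `` {t} \<in> S"
        unfolding S_def ultrapower_eq using uleq_cls[OF assms] core0 by auto
      then have "S \<subseteq> ultrapower U" "S \<noteq> {}" unfolding S_def by auto
      moreover have "\<forall>x\<in>S. uleq U x (ueq U `` {(\<lambda>_. t 0)})"
        unfolding S_def by auto
      moreover have "ueq U `` {(\<lambda>_. t 0)} \<in> ultrapower U" unfolding ultrapower_eq by auto
      ultimately obtain s where s: "s \<in> ultrapower U" "\<forall>x\<in>S. uleq U x s"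
        "\<forall>u\<in>ultrapower U. (\<forall>x\<in>S. uleq U x u) \<longrightarrow> uleq U s u"
        using C unfolding order_complete_def by blast
      then obtain b where b: "s = ueq U `` {b}" unfolding ultrapower_eq by auto
      have ub: "{n. b n \<le> t k} \<in> U" for k
      proof -
        have "uleq U s (ueq U `` {(\<lambda>_. t k)})"
          using s(3) unfolding S_def ultrapower_eq by auto
        then show ?thesis using uleq_cls[OF assms, of b "\<lambda>_. t k"] b by simp
      qed
      obtain c where c: "\<forall>k. {n. c n \<le> t k} \<in> U" "{n. b n < c n} \<in> U"
        using ult_core_dual[OF assms, of t b] dec ub by blast
      have "ueq U `` {c} \<in> S"
        unfolding S_def ultrapower_eq using uleq_cls[OF assms] c(1) by auto
      then have "uleq U (ueq U `` {c}) s" using s(2) by auto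
      then have "{n. c n \<le> b n} \<in> U" using uleq_cls[OF assms] b by auto
      then show False by (rule uf_disj[OF assms c(2)]) auto
    qed
  qed
next
  assume fin: "finite (UNIV :: 'a set)"
  have E: "equiv UNIV (ueq U)" by (rule equiv_ueq[OF assms])
  have cst: "\<exists>t. (\<lambda>_. t) \<in> X" if HX: "X \<in> (ultrapower U :: (nat \<Rightarrow> 'a) set set)" for X
  proof -
    obtain a :: "nat \<Rightarrow> 'a" where a: "X = ueq U `` {a}" using HX by (auto simp: ultrapower_def quotient_def)
    obtain t where "{n. a n = t} \<in> U" using fin_const[OF assms fin] by blast
    then show ?thesis unfolding a ueq_def by auto
  qed
  show "order_complete (ultrapower U :: (nat \<Rightarrow> 'a::linorder) set set) (uleq U)"
    unfolding order_complete_def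
  proof (intro allI impI)
    fix S :: "(nat \<Rightarrow> 'a) set set"
    assume "S \<subseteq> ultrapower U \<and> S \<noteq> {} \<and> (\<exists>u\<in>ultrapower U. \<forall>x\<in>S. uleq U x u)"
    then have SU: "S \<subseteq> ultrapower U" and Sne: "S \<noteq> {}" by auto
    define V where "V = {t. \<exists>X\<in>S. (\<lambda>_. t) \<in> X}"
    have "V \<noteq> {}" using Sne SU cst unfolding V_def by blast
    moreover have "finite V" using fin by (rule finite_subset[rotated]) simp
    ultimately have mV: "Max V \<in> V" and mx: "\<And>t. t \<in> V \<Longrightarrow> t \<le> Max V" by auto
    then obtain X0 where X0: "X0 \<in> S" "(\<lambda>_. Max V) \<in> X0" unfolding V_def by blast
    show "\<exists>s\<in>ultrapower U. (\<forall>x\<in>S. uleq U x s) \<and> (\<forall>u\<in>ultrapower U. (\<forall>x\<in>S. uleq U x u) \<longrightarrow> uleq U s u)"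
    proof (intro bexI conjI ballI impI)
      show "X0 \<in> ultrapower U" using X0 SU by auto
      fix x assume x: "x \<in> S"
      then obtain t where t: "(\<lambda>_. t) \<in> x" using cst SU by blast
      then have "t \<le> Max V" using mx x unfolding V_def by blast
      then show "uleq U x X0" unfolding uleq_def using t X0(2) uf_UNIV[OF assms] by force
    next
      fix u assume "u \<in> ultrapower U" "\<forall>x\<in>S. uleq U x u"
      then show "uleq U X0 u" using X0 by auto
    qed
  qed
qed

end
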